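(* Let $L\subseteq\Sigma^*$ be regular. (1) The map \[\mathrm{LQ}(L)\to\big(\{\mathrm{DR}_L[X]: X\subseteq \mathrm{LW}(L)\},\cup,\emptyset\big),\qquad K\mapsto\{v^{-1}L^r: v\in K^r\},\] is a well-defined isomorphism of semilattices (its codomain being a $\cup$-subsemilattice of $\mathcal{P}(\mathrm{LW}(L^r))$). (2) For all $u,v\in\Sigma^*$: $\mathrm{DR}_L(u^{-1}L,v^{-1}L^r)$ holds iff $u^{-1}L\not\subseteq \mathrm{dr}_L(v^{-1}L^r)$. (3) $\mathrm{dr}_L$ restricts to a bijection from $J(\mathrm{LQ}(L^r))$ onto $M(\mathrm{LQ}(L))$, and for all $j\in J(\mathrm{LQ}(L))$ and $k\in J(\mathrm{LQ}(L^r))$ we have $\mathrm{RDR}_L(j,k)$ iff $j\not\subseteq\mathrm{dr}_L(k)$.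
   Context: $u^{-1}L=\{w:uw\in L\}$, $U^{-1}L=\bigcup_{u\in U}u^{-1}L$; $\mathrm{LW}(L)=\{u^{-1}L:u\in\Sigma^*\}$; $\mathrm{LQ}(L)$ is the set of all finite unions (including $\emptyset$) of members of $\mathrm{LW}(L)$, a finite lattice under inclusion. $w^r$ is the reversal of $w$, $K^r=\{w^r:w\in K\}$, $\overline K=\Sigma^*\setminus K$. The dependency relation $\mathrm{DR}_L\subseteq\mathrm{LW}(L)\times\mathrm{LW}(L^r)$ is defined by $\mathrm{DR}_L(u^{-1}L,v^{-1}L^r)\iff uv^r\in L$ (well-defined), and $\mathrm{DR}_L[X]=\{y:\exists x\in X,\ \mathrm{DR}_L(x,y)\}$. For a finite lattice $S$, $J(S)$ is the set of join-irreducible elements ($j$ such that $j=\bigvee X$, $X$ finite, implies $j\in X$; in particular $j\neq\bot$) and $M(S)$ the set of meet-irreducible elements (dually). The reduced dependency relation is $\mathrm{RDR}_L=\mathrm{DR}_L\cap(J(\mathrm{LQ}(L))\times J(\mathrm{LQ}(L^r)))$. $\mathrm{dr}_L\colon\mathrm{LQ}(L^r)\to\mathrm{LQ}(L)$ is the map $K\mapsto(\overline{K^r})^{-1}L$, which is an order-reversing bijection. *)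

theory Defs
  imports Main
begin

definition dfa_lang :: "(nat \<Rightarrow> 'a \<Rightarrow> nat) \<Rightarrow> nat \<Rightarrow> nat set \<Rightarrow> 'a list set" where
  "dfa_lang \<delta> q0 F = {w. fold (\<lambda>a q. \<delta> q a) w q0 \<in> F}"

definition regular :: "'a list set \<Rightarrow> bool" where
  "regular L \<longleftrightarrow> (\<exists>(Q::nat set) \<delta> q0 F. finite Q \<and> q0 \<in> Q \<and> F \<subseteq> Q \<and>
      (\<forall>q\<in>Q. \<forall>a. \<delta> q a \<in> Q) \<and> L = dfa_lang \<delta> q0 F)"

definition lquot :: "'a list \<Rightarrow> 'a list set \<Rightarrow> 'a list set" where
  "lquot u L = {w. u @ w \<in> L}"

definition lquot_set :: "'a list set \<Rightarrow> 'a list set \<Rightarrow> 'a list set" where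
  "lquot_set U L = (\<Union>u\<in>U. lquot u L)"

definition LW :: "'a list set \<Rightarrow> 'a list set set" where
  "LW L = {lquot u L | u. True}"

definition LQ :: "'a list set \<Rightarrow> 'a list set set" where
  "LQ L = {\<Union>S | S. S \<subseteq> LW L \<and> finite S}"

definition rev_lang :: "'a list set \<Rightarrow> 'a list set" where
  "rev_lang K = rev ` K"

definition DR :: "'a list set \<Rightarrow> 'a list set \<Rightarrow> 'a list set \<Rightarrow> bool" where
  "DR L x y \<longleftrightarrow> (\<exists>u v. x = lquot u L \<and> y = lquot v (rev_lang L) \<and> u @ rev v \<in> L)"

definition DR_img :: "'a list set \<Rightarrow> 'a list set set \<Rightarrow> 'a list set set" where
  "DR_img L X = {y. \<exists>x\<in>X. DR L x y}"

definition is_lub :: "'b set set \<Rightarrow> 'b set set \<Rightarrow> 'b set \<Rightarrow> bool" where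
  "is_lub S X z \<longleftrightarrow> z \<in> S \<and> (\<forall>x\<in>X. x \<subseteq> z) \<and> (\<forall>y\<in>S. (\<forall>x\<in>X. x \<subseteq> y) \<longrightarrow> z \<subseteq> y)"

definition is_glb :: "'b set set \<Rightarrow> 'b set set \<Rightarrow> 'b set \<Rightarrow> bool" where
  "is_glb S X z \<longleftrightarrow> z \<in> S \<and> (\<forall>x\<in>X. z \<subseteq> x) \<and> (\<forall>y\<in>S. (\<forall>x\<in>X. y \<subseteq> x) \<longrightarrow> y \<subseteq> z)"

definition Jirr :: "'b set set \<Rightarrow> 'b set set" where
  "Jirr S = {j \<in> S. \<forall>X. finite X \<and> X \<subseteq> S \<and> is_lub S X j \<longrightarrow> j \<in> X}"

definition Mirr :: "'b set set \<Rightarrow> 'b set set" where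
  "Mirr S = {m \<in> S. \<forall>X. finite X \<and> X \<subseteq> S \<and> is_glb S X m \<longrightarrow> m \<in> X}"

definition RDR :: "'a list set \<Rightarrow> 'a list set \<Rightarrow> 'a list set \<Rightarrow> bool" where
  "RDR L x y \<longleftrightarrow> DR L x y \<and> x \<in> Jirr (LQ L) \<and> y \<in> Jirr (LQ (rev_lang L))"

definition dr :: "'a list set \<Rightarrow> 'a list set \<Rightarrow> 'a list set" where
  "dr L K = lquot_set (- rev_lang K) L"

end

theory Submission imports Defs begin

lemma mem_lquot[simp]: "w \<in> lquot u L \<longleftrightarrow> u @ w \<in> L"
  by (simp add: lquot_def)

lemma mem_rev_lang[simp]: "w \<in> rev_lang K \<longleftrightarrow> rev w \<in> K"
  unfolding rev_lang_def by (metis image_iff rev_rev_ident)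

lemma mem_dr: "z \<in> dr L K \<longleftrightarrow> (\<exists>x. rev x \<notin> K \<and> x @ z \<in> L)"
  unfolding dr_def lquot_set_def by (simp only: UN_iff Compl_iff mem_rev_lang mem_lquot Bex_def)

lemma fold_in_Q:
  assumes "\<forall>q\<in>Q. \<forall>a. \<delta> q a \<in> Q" "q \<in> Q"
  shows "fold (\<lambda>a q. \<delta> q a) u q \<in> Q"
  using assms(2) by (induction u arbitrary: q) (auto simp: assms(1))

lemma finite_LW: assumes "regular L" shows "finite (LW L)"
proof -
  obtain Q :: "nat set" and \<delta> q0 F where h: "finite Q" "q0 \<in> Q" "F \<subseteq> Q"
    "\<forall>q\<in>Q. \<forall>a. \<delta> q a \<in> Q" "L = dfa_lang \<delta> q0 F"
    using assms unfolding regular_def by blast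
  have "LW L \<subseteq> (\<lambda>q. dfa_lang \<delta> q F) ` Q"
  proof
    fix x assume "x \<in> LW L"
    then obtain u where x: "x = lquot u L" by (auto simp: LW_def)
    have "x = dfa_lang \<delta> (fold (\<lambda>a q. \<delta> q a) u q0) F"
      unfolding x h(5) by (simp add: dfa_lang_def lquot_def)
    moreover have "fold (\<lambda>a q. \<delta> q a) u q0 \<in> Q" using fold_in_Q[OF h(4) h(2)] .
    ultimately show "x \<in> (\<lambda>q. dfa_lang \<delta> q F) ` Q" by blast
  qed
  thus ?thesis by (rule finite_surj[OF h(1)])
qed

lemma finite_LW_rev: assumes "finite (LW L)" shows "finite (LW (rev_lang L))"
proof -
  have "LW (rev_lang L) \<subseteq> (\<lambda>P. {w. lquot (rev w) L \<in> P}) ` Pow (LW L)"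
  proof
    fix x assume "x \<in> LW (rev_lang L)"
    then obtain v where x: "x = lquot v (rev_lang L)" by (auto simp: LW_def)
    have "x = {w. lquot (rev w) L \<in> {q \<in> LW L. rev v \<in> q}}"
      unfolding x by (auto simp: LW_def)
    thus "x \<in> (\<lambda>P. {w. lquot (rev w) L \<in> P}) ` Pow (LW L)" by blast
  qed
  thus ?thesis by (rule finite_surj[OF iffD2[OF finite_Pow_iff assms]])
qed

lemma DR_iff: "DR L (lquot u L) (lquot v (rev_lang L)) \<longleftrightarrow> u @ rev v \<in> L"
proof
  assume "DR L (lquot u L) (lquot v (rev_lang L))"
  then obtain u' v' where e: "lquot u L = lquot u' L" "lquot v (rev_lang L) = lquot v' (rev_lang L)"
    "u' @ rev v' \<in> L" unfolding DR_def by blast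
  have "rev v' \<in> lquot u L" using e by simp
  hence "rev u \<in> lquot v' (rev_lang L)" by simp
  hence "rev u \<in> lquot v (rev_lang L)" using e by simp
  thus "u @ rev v \<in> L" by simp
qed (auto simp: DR_def)

lemma LQ_elem:
  assumes "K \<in> LQ L" "z \<in> K" shows "\<exists>u. u @ z \<in> L \<and> lquot u L \<subseteq> K"
proof -
  obtain S where S: "K = \<Union>S" "S \<subseteq> LW L" using assms(1) by (auto simp: LQ_def)
  then obtain X where X: "X \<in> S" "z \<in> X" using assms(2) by blast
  then obtain u where "X = lquot u L" using S by (auto simp: LW_def)
  thus ?thesis using X S by auto
qed

lemma LQ_I: "finite (LW L) \<Longrightarrow> S \<subseteq> LW L \<Longrightarrow> \<Union>S \<in> LQ L"
  by (auto simp: LQ_def intro: finite_subset)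

lemma LW_LQ: "q \<in> LW L \<Longrightarrow> q \<in> LQ L"
  unfolding LQ_def by (rule CollectI, rule exI[of _ "{q}"]) auto

lemma Jirr_LW: assumes "j \<in> Jirr (LQ L)" shows "j \<in> LW L"
proof -
  from assms have j: "j \<in> LQ L" and J: "\<And>X. finite X \<Longrightarrow> X \<subseteq> LQ L \<Longrightarrow> is_lub (LQ L) X j \<Longrightarrow> j \<in> X"
    by (auto simp: Jirr_def)
  obtain S where S: "j = \<Union>S" "S \<subseteq> LW L" "finite S" using j by (auto simp: LQ_def)
  have "S \<subseteq> LQ L" using S LW_LQ by blast
  moreover have "is_lub (LQ L) S j" using j S by (auto simp: is_lub_def)
  ultimately show ?thesis using J S by blast
qed

lemma anti_lub_glb:
  assumes T: "T = f ` S" and ord: "\<And>a b. a\<in>S \<Longrightarrow> b\<in>S \<Longrightarrow> f a \<subseteq> f b \<longleftrightarrow> b \<subseteq> a"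
    and X: "X \<subseteq> S" and j: "j \<in> S"
  shows "is_lub S X j \<longleftrightarrow> is_glb T (f ` X) (f j)"
proof -
  have o2: "f s \<subseteq> f x \<longleftrightarrow> x \<subseteq> s" if "s \<in> S" "x \<in> X" for s x
    using ord[OF that(1)] that(2) X by blast
  have o3: "f s \<subseteq> f j \<longleftrightarrow> j \<subseteq> s" if "s \<in> S" for s
    using ord[OF that j] .
  have A: "(\<forall>x\<in>X. f j \<subseteq> f x) \<longleftrightarrow> (\<forall>x\<in>X. x \<subseteq> j)" using o2[OF j] by blast
  have B: "(\<forall>y\<in>T. (\<forall>x\<in>f ` X. y \<subseteq> x) \<longrightarrow> y \<subseteq> f j) \<longleftrightarrow>
      (\<forall>y\<in>S. (\<forall>x\<in>X. x \<subseteq> y) \<longrightarrow> j \<subseteq> y)"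
  proof
    assume h: "\<forall>y\<in>T. (\<forall>x\<in>f ` X. y \<subseteq> x) \<longrightarrow> y \<subseteq> f j"
    show "\<forall>y\<in>S. (\<forall>x\<in>X. x \<subseteq> y) \<longrightarrow> j \<subseteq> y"
    proof (intro ballI impI)
      fix y assume y: "y \<in> S" "\<forall>x\<in>X. x \<subseteq> y"
      have "\<forall>x\<in>f ` X. f y \<subseteq> x" using y o2 by blast
      moreover have "f y \<in> T" using T y by blast
      ultimately have "f y \<subseteq> f j" using h by blast
      thus "j \<subseteq> y" using o3 y by blast
    qed
  next
    assume h: "\<forall>y\<in>S. (\<forall>x\<in>X. x \<subseteq> y) \<longrightarrow> j \<subseteq> y"
    show "\<forall>y\<in>T. (\<forall>x\<in>f ` X. y \<subseteq> x) \<longrightarrow> y \<subseteq> f j"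
    proof (intro ballI impI)
      fix y assume y: "y \<in> T" "\<forall>x\<in>f ` X. y \<subseteq> x"
      then obtain s where s: "s \<in> S" "y = f s" using T by blast
      have "\<forall>x\<in>X. x \<subseteq> s" using y(2) o2 s by blast
      hence "j \<subseteq> s" using h s by blast
      thus "y \<subseteq> f j" using o3 s by blast
    qed
  qed
  have C: "f j \<in> T" using T j by blast
  have A': "(\<forall>x\<in>f ` X. f j \<subseteq> x) \<longleftrightarrow> (\<forall>x\<in>X. x \<subseteq> j)" using A by auto
  show ?thesis unfolding is_lub_def is_glb_def by (simp only: A' B C j simp_thms)
qed

lemma anti_iso_JM:
  assumes b: "bij_betw f S T" and ord: "\<And>a b. a\<in>S \<Longrightarrow> b\<in>S \<Longrightarrow> f a \<subseteq> f b \<longleftrightarrow> b \<subseteq> a"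
  shows "bij_betw f (Jirr S) (Mirr T)"
proof -
  have T: "T = f ` S" and inj: "inj_on f S" using b by (auto simp: bij_betw_def)
  have JS: "Jirr S \<subseteq> S" by (auto simp: Jirr_def)
  have "f ` Jirr S = Mirr T"
  proof
    show "f ` Jirr S \<subseteq> Mirr T"
    proof
      fix m assume "m \<in> f ` Jirr S"
      then obtain j where j: "j \<in> Jirr S" "m = f j" by blast
      have jS: "j \<in> S" using j JS by blast
      have "f j \<in> Mirr T"
        unfolding Mirr_def
      proof (intro CollectI conjI allI impI)
        show "f j \<in> T" using T jS by blast
        fix Y assume Y: "finite Y \<and> Y \<subseteq> T \<and> is_glb T Y (f j)"
        define X where "X = S \<inter> f -` Y"
        have XS: "X \<subseteq> S" by (auto simp: X_def)
        have fX: "f ` X = Y" using Y T by (auto simp: X_def)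
        have "finite X" using fX Y inj XS by (metis finite_image_iff inj_on_subset)
        moreover have "is_lub S X j" using anti_lub_glb[OF T ord XS jS] fX Y by simp
        ultimately have "j \<in> X" using j(1) XS unfolding Jirr_def by blast
        thus "f j \<in> Y" using fX by blast
      qed
      thus "m \<in> Mirr T" using j by simp
    qed
  next
    show "Mirr T \<subseteq> f ` Jirr S"
    proof
      fix m assume m: "m \<in> Mirr T"
      then obtain j where j: "j \<in> S" "m = f j" using T by (auto simp: Mirr_def)
      have "j \<in> Jirr S"
        unfolding Jirr_def
      proof (intro CollectI conjI allI impI)
        show "j \<in> S" by fact
        fix X assume X: "finite X \<and> X \<subseteq> S \<and> is_lub S X j"
        hence "is_glb T (f ` X) (f j)" using anti_lub_glb[OF T ord _ j(1)] by blast
        moreover have "f ` X \<subseteq> T" using X T by blast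
        ultimately have "f j \<in> f ` X" using m j X unfolding Mirr_def by blast
        thus "j \<in> X" using inj X j(1) by (auto dest: inj_onD)
      qed
      thus "m \<in> f ` Jirr S" using j by blast
    qed
  qed
  thus ?thesis using bij_betw_subset[OF b JS] by simp
qed

lemma dr_in_LQ: "finite (LW L) \<Longrightarrow> dr L K \<in> LQ L"
  unfolding dr_def lquot_set_def by (rule LQ_I) (auto simp: LW_def)

lemma dr_recover:
  assumes "K \<in> LQ (rev_lang L)"
  shows "w \<in> K \<longleftrightarrow> (\<exists>z. z \<notin> dr L K \<and> rev w @ z \<in> L)"
proof
  assume "w \<in> K"
  then obtain v where v: "v @ w \<in> rev_lang L" "lquot v (rev_lang L) \<subseteq> K"
    using LQ_elem[OF assms] by blast
  have "rev v \<notin> dr L K"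
  proof
    assume "rev v \<in> dr L K"
    then obtain x where x: "rev x \<notin> K" "x @ rev v \<in> L" by (auto simp: mem_dr)
    have "rev x \<in> lquot v (rev_lang L)" using x(2) by simp
    thus False using x(1) v(2) by blast
  qed
  moreover have "rev w @ rev v \<in> L" using v(1) by simp
  ultimately show "\<exists>z. z \<notin> dr L K \<and> rev w @ z \<in> L" by blast
next
  assume "\<exists>z. z \<notin> dr L K \<and> rev w @ z \<in> L"
  then obtain z where "z \<notin> dr L K" "rev w @ z \<in> L" by blast
  thus "w \<in> K" by (metis mem_dr rev_rev_ident)
qed

lemma dr_ord:
  assumes "K1 \<in> LQ (rev_lang L)" "K2 \<in> LQ (rev_lang L)"
  shows "dr L K1 \<subseteq> dr L K2 \<longleftrightarrow> K2 \<subseteq> K1"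
proof
  assume "dr L K1 \<subseteq> dr L K2"
  thus "K2 \<subseteq> K1" using dr_recover[OF assms(1)] dr_recover[OF assms(2)] by blast
next
  assume "K2 \<subseteq> K1" thus "dr L K1 \<subseteq> dr L K2" unfolding subset_iff mem_dr by blast
qed

lemma dr_bij:
  assumes fin: "finite (LW L)"
  shows "bij_betw (dr L) (LQ (rev_lang L)) (LQ L)"
proof -
  have inj: "inj_on (dr L) (LQ (rev_lang L))"
    by (rule inj_onI) (metis dr_ord order_refl subset_antisym)
  have "dr L ` LQ (rev_lang L) = LQ L"
  proof
    show "dr L ` LQ (rev_lang L) \<subseteq> LQ L" using dr_in_LQ[OF fin] by blast
  next
    show "LQ L \<subseteq> dr L ` LQ (rev_lang L)"
    proof
      fix M assume M: "M \<in> LQ L"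
      define K where "K = {w. \<exists>z. z \<notin> M \<and> rev w @ z \<in> L}"
      have "K = \<Union> ((\<lambda>z. lquot (rev z) (rev_lang L)) ` (- M))"
        unfolding K_def by auto
      hence K: "K \<in> LQ (rev_lang L)"
        by (simp, intro LQ_I[OF finite_LW_rev[OF fin]]) (auto simp: LW_def)
      have "dr L K = M"
      proof
        show "dr L K \<subseteq> M" by (auto simp: mem_dr K_def)
      next
        show "M \<subseteq> dr L K"
        proof
          fix z assume "z \<in> M"
          then obtain u where u: "u @ z \<in> L" "lquot u L \<subseteq> M" using LQ_elem[OF M] by blast
          have "rev u \<notin> K" using u(2) by (auto simp: K_def)
          thus "z \<in> dr L K" using u(1) mem_dr by blast
        qed
      qed
      thus "M \<in> dr L ` LQ (rev_lang L)" using K by blast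
    qed
  qed
  thus ?thesis using inj by (simp add: bij_betw_def)
qed

lemma DR_img_phi:
  "X \<subseteq> LW L \<Longrightarrow> DR_img L X = {lquot v (rev_lang L) | v. v \<in> rev_lang (\<Union>X)}"
proof -
  assume X: "X \<subseteq> LW L"
  show ?thesis
  proof (intro set_eqI iffI)
    fix y assume "y \<in> DR_img L X"
    then obtain x where x: "x \<in> X" "DR L x y" unfolding DR_img_def by blast
    then obtain u v where uv: "x = lquot u L" "y = lquot v (rev_lang L)" "u @ rev v \<in> L"
      unfolding DR_def by blast
    have "rev v \<in> x" using uv by simp
    hence "rev v \<in> \<Union>X" using x(1) by blast
    hence "v \<in> rev_lang (\<Union>X)" by (simp only: mem_rev_lang)
    thus "y \<in> {lquot v (rev_lang L) | v. v \<in> rev_lang (\<Union>X)}" using uv(2) by blast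
  next
    fix y assume "y \<in> {lquot v (rev_lang L) | v. v \<in> rev_lang (\<Union>X)}"
    then obtain v where v: "y = lquot v (rev_lang L)" "v \<in> rev_lang (\<Union>X)" by blast
    hence "rev v \<in> \<Union>X" by (simp only: mem_rev_lang)
    then obtain x where x: "x \<in> X" "rev v \<in> x" by blast
    then obtain u where u: "x = lquot u L" using X unfolding LW_def by blast
    have "u @ rev v \<in> L" using x(2) u by simp
    hence "DR L x y" unfolding u v(1) DR_iff .
    thus "y \<in> DR_img L X" unfolding DR_img_def using x(1) by blast
  qed
qed

lemma LQ_closed:
  assumes "K \<in> LQ L" "z \<in> K" "lquot (rev z) (rev_lang L) = lquot (rev z') (rev_lang L)"
  shows "z' \<in> K"
proof -
  obtain u where u: "u @ z \<in> L" "lquot u L \<subseteq> K" using LQ_elem[OF assms(1,2)] by blast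
  have "rev u \<in> lquot (rev z) (rev_lang L)" using u by simp
  hence "rev u \<in> lquot (rev z') (rev_lang L)" using assms(3) by simp
  hence "u @ z' \<in> L" by simp
  thus ?thesis using u by auto
qed

theorem theorem3p11:
  fixes L :: "('a::finite) list set"
  assumes "regular L"
  defines "\<phi> \<equiv> (\<lambda>K. {lquot v (rev_lang L) | v. v \<in> rev_lang K})"
    and "C \<equiv> {DR_img L X | X. X \<subseteq> LW L}"
  shows "(C \<subseteq> Pow (LW (rev_lang L)) \<and> {} \<in> C \<and> (\<forall>A\<in>C. \<forall>B\<in>C. A \<union> B \<in> C)
          \<and> bij_betw \<phi> (LQ L) C
          \<and> \<phi> {} = {}
          \<and> (\<forall>K1\<in>LQ L. \<forall>K2\<in>LQ L. \<phi> (K1 \<union> K2) = \<phi> K1 \<union> \<phi> K2))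
       \<and> (\<forall>u v. DR L (lquot u L) (lquot v (rev_lang L))
                 \<longleftrightarrow> \<not> lquot u L \<subseteq> dr L (lquot v (rev_lang L)))
       \<and> bij_betw (dr L) (Jirr (LQ (rev_lang L))) (Mirr (LQ L))
       \<and> (\<forall>j\<in>Jirr (LQ L). \<forall>k\<in>Jirr (LQ (rev_lang L)). RDR L j k \<longleftrightarrow> \<not> j \<subseteq> dr L k)"
proof -
  have fin: "finite (LW L)" using finite_LW[OF assms(1)] .
  have P2: "\<forall>u v. DR L (lquot u L) (lquot v (rev_lang L))
                 \<longleftrightarrow> \<not> lquot u L \<subseteq> dr L (lquot v (rev_lang L))"
  proof (intro allI)
    fix u v
    have "\<not> lquot u L \<subseteq> dr L (lquot v (rev_lang L)) \<longleftrightarrow> u @ rev v \<in> L"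
    proof
      assume "\<not> lquot u L \<subseteq> dr L (lquot v (rev_lang L))"
      then obtain z where z: "u @ z \<in> L" "z \<notin> dr L (lquot v (rev_lang L))"
        by (metis mem_lquot subsetI)
      thus "u @ rev v \<in> L" unfolding mem_dr by auto
    next
      assume h: "u @ rev v \<in> L"
      have "rev v \<notin> dr L (lquot v (rev_lang L))" unfolding mem_dr by auto
      thus "\<not> lquot u L \<subseteq> dr L (lquot v (rev_lang L))" using h by auto
    qed
    thus "DR L (lquot u L) (lquot v (rev_lang L))
                 \<longleftrightarrow> \<not> lquot u L \<subseteq> dr L (lquot v (rev_lang L))" using DR_iff by blast
  qed
  have phiU: "\<And>K1 K2. \<phi> (K1 \<union> K2) = \<phi> K1 \<union> \<phi> K2" unfolding \<phi>_def by auto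
  have C1: "C \<subseteq> Pow (LW (rev_lang L))"
    unfolding C_def by (auto simp: DR_img_def DR_def LW_def)
  have C2: "{} \<in> C" unfolding C_def by (auto simp: DR_img_def intro!: exI[of _ "{}"])
  have C3: "\<forall>A\<in>C. \<forall>B\<in>C. A \<union> B \<in> C"
  proof (intro ballI)
    fix A B assume "A \<in> C" "B \<in> C"
    then obtain X Y where XY: "A = DR_img L X" "X \<subseteq> LW L" "B = DR_img L Y" "Y \<subseteq> LW L"
      by (auto simp: C_def)
    hence "A \<union> B = DR_img L (X \<union> Y)" by (auto simp: DR_img_def)
    moreover have "X \<union> Y \<subseteq> LW L" using XY by blast
    ultimately show "A \<union> B \<in> C" unfolding C_def by blast
  qed
  have img: "\<phi> ` LQ L = C"
  proof
    show "\<phi> ` LQ L \<subseteq> C"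
    proof
      fix y assume "y \<in> \<phi> ` LQ L"
      then obtain S where S: "y = \<phi> (\<Union>S)" "S \<subseteq> LW L" by (auto simp: LQ_def)
      have "y = DR_img L S" unfolding S(1) \<phi>_def using DR_img_phi[OF S(2)] by simp
      thus "y \<in> C" unfolding C_def using S(2) by blast
    qed
  next
    show "C \<subseteq> \<phi> ` LQ L"
    proof
      fix y assume "y \<in> C"
      then obtain X where X: "y = DR_img L X" "X \<subseteq> LW L" by (auto simp: C_def)
      hence "y = \<phi> (\<Union>X)" unfolding \<phi>_def using DR_img_phi by blast
      thus "y \<in> \<phi> ` LQ L" using LQ_I[OF fin X(2)] by blast
    qed
  qed
  have sub: "K1 \<subseteq> K2" if K: "K1 \<in> LQ L" "K2 \<in> LQ L" "\<phi> K1 = \<phi> K2" for K1 K2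
  proof
    fix z assume z: "z \<in> K1"
    have "lquot (rev z) (rev_lang L) \<in> \<phi> K1" unfolding \<phi>_def using z by auto
    hence "lquot (rev z) (rev_lang L) \<in> \<phi> K2" using K by simp
    then obtain v where v: "lquot (rev z) (rev_lang L) = lquot v (rev_lang L)" "rev v \<in> K2"
      unfolding \<phi>_def by auto
    show "z \<in> K2" using LQ_closed[OF K(2) v(2)] v(1) by simp
  qed
  have inj: "inj_on \<phi> (LQ L)"
    by (rule inj_onI) (metis sub subset_antisym)
  have P1: "bij_betw \<phi> (LQ L) C" using inj img by (simp add: bij_betw_def)
  have P3: "bij_betw (dr L) (Jirr (LQ (rev_lang L))) (Mirr (LQ L))"
    by (rule anti_iso_JM[OF dr_bij[OF fin]]) (rule dr_ord)
  have P4: "\<forall>j\<in>Jirr (LQ L). \<forall>k\<in>Jirr (LQ (rev_lang L)). RDR L j k \<longleftrightarrow> \<not> j \<subseteq> dr L k"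
  proof (intro ballI)
    fix j k assume j: "j \<in> Jirr (LQ L)" and k: "k \<in> Jirr (LQ (rev_lang L))"
    obtain u where u: "j = lquot u L" using Jirr_LW[OF j] by (auto simp: LW_def)
    obtain v where v: "k = lquot v (rev_lang L)" using Jirr_LW[OF k] by (auto simp: LW_def)
    have "DR L j k \<longleftrightarrow> \<not> j \<subseteq> dr L k" unfolding u v by (rule P2[rule_format])
    thus "RDR L j k \<longleftrightarrow> \<not> j \<subseteq> dr L k"
      using j k unfolding RDR_def by blast
  qed
  have phi0: "\<phi> {} = {}" unfolding \<phi>_def by simp
  show ?thesis
    apply (intro conjI)
    apply (fact C1)
    apply (fact C2)
    apply (fact C3)
    apply (fact P1)
    apply (fact phi0)
    apply (intro ballI, rule phiU)
    apply (fact P2)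
    apply (fact P3)
    apply (fact P4)
    done
qed

end
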